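(* Let $n\ge 3$, $\beta>0$, $\gamma>1$ with $\beta\gamma<n$, let $p,q>0$ and $\sigma_1,\sigma_2\in(-\beta\gamma,\infty)$. Suppose that either (a) $pq\le(\gamma-1)^2$, or (b) $pq>(\gamma-1)^2$ and $\max\{q_0,p_0\}>\frac{n-\beta\gamma}{\gamma-1}$. Then for every pair of double bounded functions $c_1,c_2$, the system $$u(x)=c_1(x)W_{\beta,\gamma}(|y|^{\sigma_1}v^q)(x),\qquad v(x)=c_2(x)W_{\beta,\gamma}(|y|^{\sigma_2}u^p)(x),\qquad x\in\mathbb{R}^n,$$ has no positive solution. If moreover $\gamma\in(1,2]$, the same conclusion holds when $pq>(\gamma-1)^2$ and $\max\{q_0,p_0\}=\frac{n-\beta\gamma}{\gamma-1}$.
   Context: For $f\ge 0$, $f\in L^1_{loc}(\mathbb{R}^n)$, the Wolff potential is $W_{\beta,\gamma}(f)(x)=\int_0^\infty\Big(\frac{\int_{B_t(x)}f(y)\,dy}{t^{n-\beta\gamma}}\Big)^{\frac{1}{\gamma-1}}\frac{dt}{t}$, where $B_t(x)$ is the open ball of radius $t$ centered at $x$. A function $c:\mathbb{R}^n\to\mathbb{R}$ is double bounded if there is $C>0$ with $1/C\le c(x)\le C$ for all $x$. A solution of the system is a pair of nonnegative functions $u,v\in L^1_{loc}(\mathbb{R}^n)$ satisfying both equations for a.e. $x$; it is positive if $u,v>0$. When $pq\neq(\gamma-1)^2$, set $q_0=\frac{\beta\gamma(\gamma-1+q)+(\gamma-1)\sigma_1+\sigma_2 q}{pq-(\gamma-1)^2}$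 and $p_0=\frac{\beta\gamma(\gamma-1+p)+(\gamma-1)\sigma_2+\sigma_1 p}{pq-(\gamma-1)^2}$. *)

theory Defs
  imports "HOL-Analysis.Analysis"
begin

definition locally_integrable :: "('a::euclidean_space \<Rightarrow> real) \<Rightarrow> bool" where
  "locally_integrable f \<longleftrightarrow> f \<in> borel_measurable lebesgue \<and>
     (\<forall>K. compact K \<longrightarrow> set_integrable lebesgue K f)"

definition double_bounded :: "('a \<Rightarrow> real) \<Rightarrow> bool" where
  "double_bounded c \<longleftrightarrow> (\<exists>C>0. \<forall>x. 1 / C \<le> c x \<and> c x \<le> C)"

definition wolff :: "real \<Rightarrow> real \<Rightarrow> ('a::euclidean_space \<Rightarrow> real) \<Rightarrow> 'a \<Rightarrow> ennreal" where
  "wolff \<beta> \<gamma> f x =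
     (\<integral>\<^sup>+ t. indicator {0<..} t *
        (let I = (\<integral>\<^sup>+ y. indicator (ball x t) y * ennreal (f y) \<partial>lebesgue)
         in if I = top then top
            else ennreal ((enn2real I / t powr (real DIM('a) - \<beta> * \<gamma>)) powr (1 / (\<gamma> - 1)) / t))
      \<partial>lborel)"

definition q0 :: "real \<Rightarrow> real \<Rightarrow> real \<Rightarrow> real \<Rightarrow> real \<Rightarrow> real \<Rightarrow> real" where
  "q0 \<beta> \<gamma> p q \<sigma>1 \<sigma>2 =
     (\<beta> * \<gamma> * (\<gamma> - 1 + q) + (\<gamma> - 1) * \<sigma>1 + \<sigma>2 * q) / (p * q - (\<gamma> - 1)\<^sup>2)"

definition p0 :: "real \<Rightarrow> real \<Rightarrow> real \<Rightarrow> real \<Rightarrow> real \<Rightarrow> real \<Rightarrow> real" where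
  "p0 \<beta> \<gamma> p q \<sigma>1 \<sigma>2 =
     (\<beta> * \<gamma> * (\<gamma> - 1 + p) + (\<gamma> - 1) * \<sigma>2 + \<sigma>1 * p) / (p * q - (\<gamma> - 1)\<^sup>2)"

definition positive_solution ::
  "real \<Rightarrow> real \<Rightarrow> real \<Rightarrow> real \<Rightarrow> real \<Rightarrow> real \<Rightarrow> ('a::euclidean_space \<Rightarrow> real) \<Rightarrow> ('a \<Rightarrow> real)
   \<Rightarrow> ('a \<Rightarrow> real) \<Rightarrow> ('a \<Rightarrow> real) \<Rightarrow> bool" where
  "positive_solution \<beta> \<gamma> p q \<sigma>1 \<sigma>2 c1 c2 u v \<longleftrightarrow>
     locally_integrable u \<and> locally_integrable v \<and>
     (\<forall>x. u x > 0) \<and> (\<forall>x. v x > 0) \<and>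
     (AE x in lebesgue.
        ennreal (u x) = ennreal (c1 x) * wolff \<beta> \<gamma> (\<lambda>y. norm y powr \<sigma>1 * v y powr q) x \<and>
        ennreal (v x) = ennreal (c2 x) * wolff \<beta> \<gamma> (\<lambda>y. norm y powr \<sigma>2 * u y powr p) x)"

end

theory Submission
  imports Defs
begin




lemma emeasure_lebesgue_ball:
  fixes c :: "'a::euclidean_space"
  assumes "r \<ge> 0"
  shows "emeasure lebesgue (ball c r) = ennreal (unit_ball_vol (DIM('a)) * r ^ DIM('a))"
  using emeasure_ball[OF assms, of c] by (simp add: emeasure_completion)

lemma id_lebesgue_meas [measurable]: "(\<lambda>x::'a::euclidean_space. x) \<in> borel_measurable lebesgue"
  by (rule measurable_completion) simp

lemma ball_lebesgue_pred [measurable]: "Measurable.pred lebesgue (\<lambda>x::'a::euclidean_space. x \<in> ball c r)"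
  by (rule measurable_completion) simp

lemma meas_test:
  fixes w :: "'a::euclidean_space \<Rightarrow> real"
  assumes "w \<in> borel_measurable lebesgue"
  shows "(\<lambda>y. norm y powr s * w y powr r) \<in> borel_measurable lebesgue"
  using assms by measurable

lemma ex_good:
  fixes P :: "'a::euclidean_space \<Rightarrow> bool"
  assumes "AE x in lebesgue. P x"
  shows "\<exists>x. P x"
proof (rule ccontr)
  assume "\<not> ?thesis"
  with assms have "AE x in (lebesgue :: 'a measure). False" by simp
  hence "emeasure lebesgue (UNIV :: 'a set) = 0" by (metis ae_filter_eq_bot_iff eventually_False space_borel space_completion space_lborel)
  moreover have "emeasure lebesgue (ball (0::'a) 1) \<le> emeasure lebesgue (UNIV :: 'a set)"
    by (intro emeasure_mono) auto
  moreover have "emeasure lebesgue (ball (0::'a) 1) > 0"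
    using emeasure_lebesgue_ball[of 1 "0::'a"] by simp
  ultimately show False by simp
qed


lemma wolff_lower:
  fixes h :: "'a::euclidean_space \<Rightarrow> real" and x :: 'a and T :: real
  defines "I0 \<equiv> (\<integral>\<^sup>+ y. indicator (ball 0 T) y * ennreal (h y) \<partial>lebesgue)"
  assumes T: "T > 0" "norm x \<le> T" and d: "real DIM('a) - \<beta> * \<gamma> > 0" and g: "\<gamma> > 1"
  shows "wolff \<beta> \<gamma> h x \<ge> (if I0 = top then top else
     ennreal ((enn2real I0 / (4*T) powr (real DIM('a) - \<beta> * \<gamma>)) powr (1/(\<gamma>-1)) / 2))"
proof -
  define d where "d = real DIM('a) - \<beta> * \<gamma>"
  define k where "k = 1/(\<gamma>-1)"
  have k: "k > 0" using g by (simp add: k_def)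
  define X where "X = (enn2real I0 / (4*T) powr d) powr k"
  define c where "c = (if I0 = top then top else ennreal (X / (4*T)))"
  have X: "X \<ge> 0" by (simp add: X_def)
  have pt: "indicator {2*T<..<4*T} t * c \<le> indicator {0<..} t *
        (let I = (\<integral>\<^sup>+ y. indicator (ball x t) y * ennreal (h y) \<partial>lebesgue)
         in if I = top then top
            else ennreal ((enn2real I / t powr d) powr (1 / (\<gamma> - 1)) / t))" for t
  proof (cases "t \<in> {2*T<..<4*T}")
    case False thus ?thesis by simp
  next
    case True
    hence t: "2*T < t" "t < 4*T" by auto
    have tp: "t > 0" using t T by simp
    define It where "It = (\<integral>\<^sup>+ y. indicator (ball x t) y * ennreal (h y) \<partial>lebesgue)"
    have sub: "ball 0 T \<subseteq> ball x t"
    proof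
      fix y :: 'a assume "y \<in> ball 0 T"
      hence "norm y < T" by simp
      hence "dist x y < t" using T t norm_triangle_ineq4[of x y] by (simp add: dist_norm) 
      thus "y \<in> ball x t" by simp
    qed
    have mono: "I0 \<le> It" unfolding I0_def It_def
      by (intro nn_integral_mono) (use sub in \<open>auto split: split_indicator\<close>)
    show ?thesis
    proof (cases "It = top")
      case True thus ?thesis using tp t by (simp add: Let_def It_def[symmetric])
    next
      case False
      hence I0f: "I0 \<noteq> top" using mono top_unique by (metis)
      have r: "enn2real I0 \<le> enn2real It" using mono False enn2real_mono top.not_eq_extremum by blast
      have "(4*T) powr d \<ge> t powr d" using t tp d by (intro powr_mono2) (auto simp: d_def)
      hence "enn2real I0 / (4*T) powr d \<le> enn2real It / t powr d"
        using r tp T by (intro frac_le) auto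
      hence "X \<le> (enn2real It / t powr d) powr k"
        unfolding X_def using k by (intro powr_mono2) auto
      hence "X / (4*T) \<le> (enn2real It / t powr d) powr k / t"
        using X t tp by (intro frac_le) auto
      thus ?thesis using True tp False I0f
        by (simp add: Let_def It_def[symmetric] c_def k_def d_def ennreal_leI)
    qed
  qed
  have "(\<integral>\<^sup>+ t. indicator {2*T<..<4*T} t * c \<partial>lborel) \<le> wolff \<beta> \<gamma> h x"
    unfolding wolff_def d_def[symmetric] by (rule nn_integral_mono) (rule pt)
  moreover have "(\<integral>\<^sup>+ t. indicator {2*T<..<4*T} t * c \<partial>lborel) = c * ennreal (2*T)"
    using T by (subst mult.commute, subst nn_integral_cmult_indicator) auto
  moreover have "c * ennreal (2*T) = (if I0 = top then top else ennreal (X/2))"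
    using T X by (auto simp: c_def ennreal_mult''[symmetric] ennreal_top_mult)
  ultimately show ?thesis by (cases "I0 = top") (auto simp: X_def k_def d_def)
qed


lemma good_point:
  fixes h :: "'a::euclidean_space \<Rightarrow> real" and x :: 'a and T :: real
  defines "I0 \<equiv> (\<integral>\<^sup>+ y. indicator (ball 0 T) y * ennreal (h y) \<partial>lebesgue)"
  assumes ux: "u x \<ge> 0" and eq: "ennreal (u x) = ennreal (c x) * wolff \<beta> \<gamma> h x"
    and C: "C > 0" "c x \<ge> 1/C"
    and T: "T > 0" "norm x \<le> T" and d: "real DIM('a) - \<beta> * \<gamma> > 0" and g: "\<gamma> > 1"
  shows "I0 \<noteq> top \<and> u x \<ge> (1/C) * ((enn2real I0 / (4*T) powr (real DIM('a) - \<beta> * \<gamma>)) powr (1/(\<gamma>-1)) / 2)"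
proof -
  define Y where "Y = (enn2real I0 / (4*T) powr (real DIM('a) - \<beta> * \<gamma>)) powr (1/(\<gamma>-1)) / 2"
  have Y: "Y \<ge> 0" by (simp add: Y_def)
  have cx: "c x > 0" using C by (smt (verit) divide_pos_pos)
  have W: "wolff \<beta> \<gamma> h x \<ge> (if I0 = top then top else ennreal Y)"
    using wolff_lower[OF T d g, of h] unfolding I0_def Y_def by (cases "(\<integral>\<^sup>+ y. indicator (ball 0 T) y * ennreal (h y) \<partial>lebesgue) = top") auto
  have I0: "I0 \<noteq> top"
  proof
    assume "I0 = top"
    hence "wolff \<beta> \<gamma> h x = top" using W by (simp add: top_unique)
    hence "ennreal (u x) = top" using eq cx by (simp add: ennreal_mult_top)
    thus False by simp
  qed
  have "ennreal (c x * Y) = ennreal (c x) * ennreal Y" using cx Y by (simp add: ennreal_mult)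
  also have "\<dots> \<le> ennreal (c x) * wolff \<beta> \<gamma> h x" using W I0 by (intro mult_left_mono) auto
  finally have "ennreal (c x * Y) \<le> ennreal (u x)" using eq by simp
  hence "c x * Y \<le> u x"
    using ux by (simp add: ennreal_le_iff)
  moreover have "(1/C) * Y \<le> c x * Y" using C Y by (intro mult_right_mono) auto
  ultimately show ?thesis using I0 by (simp add: Y_def)
qed

lemma shell:
  fixes h :: "'a::euclidean_space \<Rightarrow> real"
  assumes hm: "h \<in> borel_measurable lebesgue" and R: "R > 0" and c: "c \<ge> 0"
    and low: "AE y in lebesgue. R/2 \<le> norm y \<and> norm y < R \<longrightarrow> c \<le> h y"
  shows "(\<integral>\<^sup>+ y. indicator (ball 0 R) y * ennreal (h y) \<partial>lebesgue) \<ge>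
         (\<integral>\<^sup>+ y. indicator (ball 0 (R/2)) y * ennreal (h y) \<partial>lebesgue)
          + ennreal (c * (unit_ball_vol (DIM('a)) * R ^ DIM('a) * (1 - (1/2) ^ DIM('a))))"
proof -
  define S where "S = ball (0::'a) R - ball 0 (R/2)"
  have Sm: "S \<in> sets lebesgue" by (simp add: S_def)
  have split: "indicator (ball 0 R) y * ennreal (h y) =
      indicator (ball 0 (R/2)) y * ennreal (h y) + indicator S y * ennreal (h y)" for y :: 'a
    using R by (auto simp: S_def split: split_indicator)
  have E: "(\<integral>\<^sup>+ y. indicator (ball 0 R) y * ennreal (h y) \<partial>lebesgue) =
       (\<integral>\<^sup>+ y. indicator (ball 0 (R/2)) y * ennreal (h y) \<partial>lebesgue) +
       (\<integral>\<^sup>+ y. indicator S y * ennreal (h y) \<partial>lebesgue)"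
    unfolding split using hm Sm
    by (intro nn_integral_add borel_measurable_times_ennreal borel_measurable_indicator) auto
  have M: "(\<integral>\<^sup>+ y. ennreal c * indicator S y \<partial>lebesgue) \<le> (\<integral>\<^sup>+ y. indicator S y * ennreal (h y) \<partial>lebesgue)"
  proof (rule nn_integral_mono_AE)
    show "AE y in lebesgue. ennreal c * indicator S y \<le> indicator S y * ennreal (h y)"
      using low by eventually_elim (auto simp: S_def split: split_indicator intro: ennreal_leI)
  qed
  have C: "(\<integral>\<^sup>+ y. ennreal c * indicator S y \<partial>lebesgue) = ennreal c * emeasure lebesgue S"
    using Sm by (rule nn_integral_cmult_indicator)
  have ES: "emeasure lebesgue S = ennreal (unit_ball_vol (DIM('a)) * R ^ DIM('a) * (1 - (1/2) ^ DIM('a)))"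
  proof -
    have "emeasure lebesgue S = emeasure lebesgue (ball (0::'a) R) - emeasure lebesgue (ball (0::'a) (R/2))"
      unfolding S_def using R emeasure_lebesgue_ball[of "R/2" "0::'a"] by (intro emeasure_Diff) auto
    also have "\<dots> = ennreal (unit_ball_vol (DIM('a)) * R ^ DIM('a) - unit_ball_vol (DIM('a)) * (R/2) ^ DIM('a))"
      using R emeasure_lebesgue_ball[of "R/2" "0::'a"] emeasure_lebesgue_ball[of "R" "0::'a"]
      by (simp add: ennreal_minus del: emeasure_completion)
    also have "unit_ball_vol (DIM('a)) * R ^ DIM('a) - unit_ball_vol (DIM('a)) * (R/2) ^ DIM('a)
        = unit_ball_vol (DIM('a)) * R ^ DIM('a) * (1 - (1/2) ^ DIM('a))"
      by (simp add: power_divide algebra_simps)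
    finally show ?thesis .
  qed
  have EM: "ennreal c * ennreal (unit_ball_vol (DIM('a)) * R ^ DIM('a) * (1 - (1/2) ^ DIM('a)))
      = ennreal (c * (unit_ball_vol (DIM('a)) * R ^ DIM('a) * (1 - (1/2) ^ DIM('a))))"
    using c by (simp add: ennreal_mult')
  show ?thesis unfolding E using M unfolding C ES EM by (rule add_left_mono)
qed



lemma final_contra:
  fixes F G :: "real \<Rightarrow> real"
  assumes k: "k > 0" and p: "p > 0" and q: "q > 0" and d: "d > 0"
    and A1: "A1 > 0" and A2: "A2 > 0" and R0: "R0 > 0" and Cg: "Cg > 0"
    and S1: "\<And>R. R \<ge> R0 \<Longrightarrow> F R \<ge> A1 * R powr a1 * G R powr (q*k)"
    and S2: "\<And>R. R \<ge> R0 \<Longrightarrow> G R \<ge> G (R/2) + A2 * R powr a2 * F R powr (p*k)"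
    and posG: "\<And>R. R > 0 \<Longrightarrow> G R > 0"
    and posF: "\<And>R. R > 0 \<Longrightarrow> F R > 0"
    and Ub: "\<And>R. R \<ge> R0 \<Longrightarrow> G R \<le> Cg * R powr d"
    and cond: "(p*q*k^2 \<le> 1 \<and> a2 + p*k*a1 > d*(1 - p*q*k^2)) \<or> (p*q*k^2 > 1 \<and> a2 + p*k*a1 \<ge> 0)"
  shows False
proof -
  define m where "m = p*q*k^2"
  define e where "e = a2 + p*k*a1"
  define A where "A = A2 * A1 powr (p*k)"
  have m: "m > 0" using p q k by (simp add: m_def)
  have A: "A > 0" using A1 A2 by (simp add: A_def)
  have key: "G R \<ge> G (R/2) + A * R powr e * G R powr m" if R: "R \<ge> R0" for R
  proof -
    have Rp: "R > 0" using R R0 by simp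
    have "(A1 * R powr a1 * G R powr (q*k)) powr (p*k) \<le> F R powr (p*k)"
      using S1[OF R] A1 Rp posG[OF Rp] p k by (intro powr_mono2) auto
    moreover have "(A1 * R powr a1 * G R powr (q*k)) powr (p*k)
        = A1 powr (p*k) * R powr (a1*(p*k)) * G R powr m"
      using A1 Rp posG[OF Rp] by (simp add: powr_mult powr_powr m_def power2_eq_square mult_ac)
    ultimately have "A1 powr (p*k) * R powr (a1*(p*k)) * G R powr m \<le> F R powr (p*k)" by simp
    hence "A2 * R powr a2 * (A1 powr (p*k) * R powr (a1*(p*k)) * G R powr m)
         \<le> A2 * R powr a2 * F R powr (p*k)"
      using A2 by (intro mult_left_mono) auto
    moreover have "A2 * R powr a2 * (A1 powr (p*k) * R powr (a1*(p*k)) * G R powr m)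
         = A * R powr e * G R powr m"
      by (simp add: A_def e_def powr_add mult_ac)
    ultimately show ?thesis using S2[OF R] by linarith
  qed
  show False
  proof (cases "m \<le> 1")
    case True
    with cond have del: "e - d*(1-m) > 0" by (auto simp: m_def e_def)
    define R where "R = max R0 ((Cg powr (1-m) / A + 1) powr (1 / (e - d*(1-m))))"
    have R: "R \<ge> R0" by (simp add: R_def)
    have Rp: "R > 0" using R R0 by simp
    have GR: "G R > 0" using posG Rp by simp
    have "A * R powr e * G R powr m \<le> G R"
      using key[OF R] posG[of "R/2"] Rp by linarith
    hence "A * R powr e \<le> G R powr (1 - m)"
      using GR by (simp add: powr_diff field_simps)
    also have "\<dots> \<le> (Cg * R powr d) powr (1-m)"
      using Ub[OF R] GR True by (intro powr_mono2) auto
    also have "\<dots> = Cg powr (1-m) * R powr (d*(1-m))"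
      using Cg Rp by (simp add: powr_mult powr_powr)
    finally have "A * R powr e \<le> Cg powr (1-m) * R powr (d*(1-m))" .
    hence "R powr e / R powr (d*(1-m)) \<le> Cg powr (1-m) / A"
      using A Rp by (simp add: field_simps)
    hence "R powr (e - d*(1-m)) \<le> Cg powr (1-m) / A"
      by (simp add: powr_diff)
    moreover have "R powr (e - d*(1-m)) \<ge> Cg powr (1-m) / A + 1"
    proof -
      have "Cg powr (1-m) / A + 1 = ((Cg powr (1-m) / A + 1) powr (1 / (e - d*(1-m)))) powr (e - d*(1-m))"
        using del A by (simp add: powr_powr)
      also have "\<dots> \<le> R powr (e - d*(1-m))"
        using del A by (intro powr_mono2) (auto simp: R_def)
      finally show ?thesis .
    qed
    ultimately show False by simp
  next
    case False
    with cond have m1: "m > 1" and e: "e \<ge> 0" by (auto simp: m_def e_def)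
    define R1 where "R1 = max R0 1"
    have R1: "R1 \<ge> R0" "R1 \<ge> 1" by (auto simp: R1_def)
    have key2: "G R \<ge> G (R/2) + A * G R powr m" if R: "R \<ge> R1" for R
    proof -
      have "R powr e \<ge> 1" using R R1 e by (simp add: ge_one_powr_ge_zero)
      hence "A * G R powr m \<le> A * R powr e * G R powr m"
        using A by (simp add: mult_right_mono mult_left_mono)
      thus ?thesis using key[of R] R R1 by linarith
    qed
    have bound: "G R \<le> (1/A) powr (1/(m-1))" if R: "R \<ge> R1" for R
    proof -
      have GR: "G R > 0" using posG R R1 by simp
      have "A * G R powr m \<le> G R" using key2[OF R] posG[of "R/2"] R R1 by linarith
      hence "G R powr (m - 1) \<le> 1/A" using GR A by (simp add: powr_diff field_simps)
      hence "(G R powr (m - 1)) powr (1/(m-1)) \<le> (1/A) powr (1/(m-1))"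
        using m1 GR by (intro powr_mono2) auto
      thus ?thesis using m1 GR by (simp add: powr_powr)
    qed
    define g where "g = G R1"
    have g: "g > 0" using posG R1 by (simp add: g_def)
    have grow: "G (R1 * 2^j) \<ge> g + j * (A * g powr m)" for j :: nat
    proof (induction j)
      case 0 thus ?case by (simp add: g_def)
    next
      case (Suc j)
      have "(1::real) \<le> 2^Suc j" by (rule one_le_power) simp
      hence Rj: "R1 * 2^Suc j \<ge> R1" using R1 by (simp add: mult_le_cancel_left1)
      have half: "R1 * 2^Suc j / 2 = R1 * 2^j" by simp
      have gm0: "A * g powr m \<ge> 0" using A g by simp
      have k2: "G (R1 * 2^Suc j) \<ge> G (R1*2^j) + A * G (R1 * 2^Suc j) powr m"
        using key2[OF Rj] half by simp
      have "G (R1 * 2^Suc j) \<ge> g"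
        using k2 Suc.IH gm0 A posG[of "R1 * 2^Suc j"] R1
        by (smt (verit) of_nat_0_le_iff mult_nonneg_nonneg powr_ge_zero)
      hence "G (R1 * 2^Suc j) powr m \<ge> g powr m" using g m by (intro powr_mono2) auto
      hence "A * G (R1 * 2^Suc j) powr m \<ge> A * g powr m" using A by simp
      thus ?case using k2 Suc.IH by (simp add: algebra_simps)
    qed
    obtain j :: nat where j: "real j > (1/A) powr (1/(m-1)) / (A * g powr m)"
      using reals_Archimedean2 by blast
    have "j * (A * g powr m) > (1/A) powr (1/(m-1))"
      using j A g by (simp add: field_simps)
    moreover have "G (R1 * 2^j) \<le> (1/A) powr (1/(m-1))"
      using R1 by (intro bound) (simp add: mult_le_cancel_left1 one_le_power)
    ultimately show False using grow[of j] g by linarith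
  qed
qed


lemma powr_shell:
  fixes R t s :: real
  assumes R: "R > 0" "R/2 \<le> t" "t < R"
  shows "min (2 powr (-s)) 1 * R powr s \<le> t powr s"
proof (cases "s \<ge> 0")
  case True
  have "(R/2) powr s \<le> t powr s" using R True by (intro powr_mono2) auto
  moreover have "(R/2) powr s = 2 powr (-s) * R powr s"
    using R by (simp add: powr_divide powr_minus_divide)
  moreover have "min (2 powr (-s)) 1 * R powr s \<le> 2 powr (-s) * R powr s"
    by (intro mult_right_mono) auto
  ultimately show ?thesis by linarith
next
  case False
  have "R powr s \<le> t powr s" using R False by (intro powr_mono2') auto
  moreover have "min (2 powr (-s)) 1 * R powr s \<le> 1 * R powr s"
    by (rule mult_right_mono) auto
  ultimately show ?thesis by linarith
qed

lemma rewrite_const: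
  fixes R G C d k q ms w om :: real and N :: nat
  assumes R: "R > 0" and G: "G > 0" and C: "C > 0"
  shows "ms * R powr s * ((1/C) * ((G / (4*R) powr d) powr k / 2)) powr q * (om * R ^ N * w)
    = (ms * (1/(2*C)) powr q * 4 powr (-(d*k*q)) * om * w) * R powr (real N + s - d*k*q) * G powr (q*k)"
proof -
  have 1: "(G / (4*R) powr d) powr k = G powr k * (4*R) powr (-(d*k))"
    using R G by (simp add: powr_divide powr_powr powr_minus_divide)
  have 2: "(1/C) * (G powr k * (4*R) powr (-(d*k)) / 2) = (1/(2*C)) * (G powr k * (4*R) powr (-(d*k)))"
    by simp
  have 3: "((1/(2*C)) * (G powr k * (4*R) powr (-(d*k)))) powr q
      = (1/(2*C)) powr q * (G powr (k*q) * (4*R) powr (-(d*k)*q))"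
  proof -
    have "((1/(2*C)) * (G powr k * (4*R) powr (-(d*k)))) powr q
       = (1/(2*C)) powr q * (G powr k * (4*R) powr (-(d*k))) powr q"
      by (rule powr_mult)
    also have "(G powr k * (4*R) powr (-(d*k))) powr q = (G powr k) powr q * ((4*R) powr (-(d*k))) powr q"
      by (rule powr_mult)
    finally show ?thesis by (simp add: powr_powr)
  qed
  have 4: "(4*R) powr (-(d*k)*q) = 4 powr (-(d*k*q)) * R powr (-(d*k*q))"
    using R by (simp add: powr_mult)
  have 5: "R ^ N = R powr (real N)" using R by (simp add: powr_realpow)
  have 6: "R powr (real N + s - d*k*q) = R powr s * R powr (real N) * R powr (-(d*k*q))"
    by (simp add: powr_add[symmetric] add.commute)
  show ?thesis unfolding 1 2 3 4 5 6 by (simp add: mult.commute mult.left_commute)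
qed

lemma cond_alg:
  fixes \<beta> \<gamma> p q s1 s2 nn :: real
  assumes g: "\<gamma> > 1" and p: "p > 0" and q: "q > 0"
    and s1: "s1 > -(\<beta>*\<gamma>)" and s2: "s2 > -(\<beta>*\<gamma>)"
  defines "d \<equiv> nn - \<beta>*\<gamma>" and "k \<equiv> 1/(\<gamma>-1)"
  defines "a1 \<equiv> nn + s1 - d*k*q" and "a2 \<equiv> nn + s2 - d*k*p"
  assumes cond: "p*q \<le> (\<gamma>-1)^2 \<or> (p*q > (\<gamma>-1)^2 \<and>
      (\<beta> * \<gamma> * (\<gamma> - 1 + p) + (\<gamma> - 1) * s2 + s1 * p) / (p * q - (\<gamma> - 1)\<^sup>2) \<ge> d/(\<gamma>-1))"
  shows "(p*q*k^2 \<le> 1 \<and> a2 + p*k*a1 > d*(1 - p*q*k^2)) \<or> (p*q*k^2 > 1 \<and> a2 + p*k*a1 \<ge> 0)"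
proof -
  have g1: "\<gamma> - 1 > 0" using g by simp
  have kk: "k * (\<gamma>-1) = 1" using g1 by (simp add: k_def)
  have m_iff: "p*q*k^2 \<le> 1 \<longleftrightarrow> p*q \<le> (\<gamma>-1)^2"
  proof -
    have "p*q*k^2 * (\<gamma>-1)^2 = p*q*(k*(\<gamma>-1))^2" by (simp add: power_mult_distrib)
    hence "p*q*k^2 * (\<gamma>-1)^2 = p*q" using kk by simp
    moreover have "(\<gamma>-1)^2 > 0" using g1 by simp
    ultimately show ?thesis by (metis mult_le_cancel_right_pos mult_1 mult.commute)
  qed
  have E1: "a2 + p*k*a1 - d*(1 - p*q*k^2) = \<beta>*\<gamma> + s2 + p*k*(\<beta>*\<gamma> + s1)"
    by (simp add: a1_def a2_def d_def algebra_simps power2_eq_square)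
  have pos: "\<beta>*\<gamma> + s2 + p*k*(\<beta>*\<gamma> + s1) > 0"
    using s1 s2 p g1 by (simp add: k_def add_pos_pos)
  have E2: "(\<gamma>-1)^2 * (a2 + p*k*a1) = (\<gamma>-1) * (\<beta> * \<gamma> * (\<gamma> - 1 + p) + (\<gamma> - 1) * s2 + s1 * p)
            - d * (p * q - (\<gamma> - 1)\<^sup>2)"
  proof -
    have A1: "a1*(\<gamma>-1) = (nn+s1)*(\<gamma>-1) - d*q*(k*(\<gamma>-1))" by (simp add: a1_def algebra_simps)
    have A2: "a2*(\<gamma>-1) = (nn+s2)*(\<gamma>-1) - d*p*(k*(\<gamma>-1))" by (simp add: a2_def algebra_simps)
    have "(\<gamma>-1)^2 * (a2 + p*k*a1) = (\<gamma>-1)*(a2*(\<gamma>-1)) + p*(k*(\<gamma>-1))*(a1*(\<gamma>-1))"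
      by (simp add: power2_eq_square algebra_simps)
    also have "\<dots> = (\<gamma>-1)*((nn+s2)*(\<gamma>-1) - d*p) + p*((nn+s1)*(\<gamma>-1) - d*q)"
      unfolding A1 A2 kk by simp
    finally show ?thesis by (simp add: d_def power2_eq_square algebra_simps)
  qed
  show ?thesis
  proof (cases "p*q \<le> (\<gamma>-1)^2")
    case True thus ?thesis using m_iff E1 pos by auto
  next
    case False
    with cond have D: "p * q - (\<gamma> - 1)\<^sup>2 > 0" and
      P: "(\<beta> * \<gamma> * (\<gamma> - 1 + p) + (\<gamma> - 1) * s2 + s1 * p) / (p * q - (\<gamma> - 1)\<^sup>2) \<ge> d/(\<gamma>-1)" by auto
    from P D g1 have "(\<gamma>-1) * (\<beta> * \<gamma> * (\<gamma> - 1 + p) + (\<gamma> - 1) * s2 + s1 * p) \<ge> d * (p * q - (\<gamma> - 1)\<^sup>2)"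
      by (simp add: field_simps)
    hence "(\<gamma>-1)^2 * (a2 + p*k*a1) \<ge> 0" using E2 by simp
    hence "a2 + p*k*a1 \<ge> 0" using g1 by (simp add: zero_le_mult_iff)
    thus ?thesis using False m_iff by auto
  qed
qed

lemma emeasure_shell:
  assumes R: "R > (0::real)"
  shows "emeasure lebesgue (ball (0::'a::euclidean_space) R - ball 0 (R/2))
     = ennreal (unit_ball_vol (DIM('a)) * R ^ DIM('a) * (1 - (1/2) ^ DIM('a)))"
proof -
  have "emeasure lebesgue (ball (0::'a) R - ball 0 (R/2)) = emeasure lebesgue (ball (0::'a) R) - emeasure lebesgue (ball (0::'a) (R/2))"
    using R emeasure_lebesgue_ball[of "R/2" "0::'a"] by (intro emeasure_Diff) auto
  also have "\<dots> = ennreal (unit_ball_vol (DIM('a)) * R ^ DIM('a) - unit_ball_vol (DIM('a)) * (R/2) ^ DIM('a))"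
    using R emeasure_lebesgue_ball[of "R/2" "0::'a"] emeasure_lebesgue_ball[of "R" "0::'a"]
    by (simp add: ennreal_minus del: emeasure_completion)
  also have "unit_ball_vol (DIM('a)) * R ^ DIM('a) - unit_ball_vol (DIM('a)) * (R/2) ^ DIM('a)
      = unit_ball_vol (DIM('a)) * R ^ DIM('a) * (1 - (1/2) ^ DIM('a))"
    by (simp add: power_divide algebra_simps)
  finally show ?thesis .
qed

lemma shell_vol_pos: "R > 0 \<Longrightarrow> unit_ball_vol (DIM('a::euclidean_space)) * R ^ DIM('a) * (1 - (1/2) ^ DIM('a)) > 0"
proof -
  assume R: "R > 0"
  have "(1/2::real) ^ DIM('a) < 1" by (simp add: power_less_one_iff)
  thus ?thesis using R by simp
qed

lemma ball_integral_pos: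
  fixes h :: "'a::euclidean_space \<Rightarrow> real"
  assumes hm: "h \<in> borel_measurable lebesgue" and hpos: "\<And>y. y \<noteq> 0 \<Longrightarrow> h y > 0" and R: "R > 0"
  shows "(\<integral>\<^sup>+ y. indicator (ball 0 R) y * ennreal (h y) \<partial>lebesgue) > 0"
proof (rule ccontr)
  define S where "S = ball (0::'a) R - ball 0 (R/2)"
  have Sm: "S \<in> sets lebesgue" by (simp add: S_def)
  assume "\<not> ?thesis"
  hence "(\<integral>\<^sup>+ y. indicator (ball 0 R) y * ennreal (h y) \<partial>lebesgue) = 0" by (simp add: not_gr_zero)
  hence "AE y in lebesgue. indicator (ball 0 R) y * ennreal (h y) = 0"
    using hm by (subst (asm) nn_integral_0_iff_AE) (auto intro: borel_measurable_times_ennreal borel_measurable_indicator)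
  hence "AE y in lebesgue. y \<notin> S"
  proof eventually_elim
    case (elim y)
    show ?case
    proof
      assume yS: "y \<in> S"
      hence "y \<noteq> 0" "y \<in> ball 0 R" using R by (auto simp: S_def)
      hence "indicator (ball 0 R) y * ennreal (h y) \<noteq> 0" using hpos[of y] by simp
      thus False using elim by simp
    qed
  qed
  hence "S \<in> null_sets lebesgue" using Sm by (simp add: AE_iff_null_sets)
  hence "emeasure lebesgue S = 0" by (rule null_setsD1)
  moreover have "emeasure lebesgue S > 0"
    using emeasure_shell[OF R, where 'a='a] shell_vol_pos[OF R, where 'a='a] by (simp add: S_def del: emeasure_completion)
  ultimately show False by simp
qed



lemma S_step:
  fixes w :: "'a::euclidean_space \<Rightarrow> real" and Zr :: "real \<Rightarrow> real" and q \<sigma> C R d k :: real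
  defines "IE \<equiv> (\<lambda>R. \<integral>\<^sup>+ y. indicator (ball 0 R) y * ennreal (norm y powr \<sigma> * w y powr q) \<partial>lebesgue)"
  assumes wm: "w \<in> borel_measurable lebesgue" and q: "q > 0" and C: "C > 0" and R: "R > 0"
    and Z: "Zr R > 0"
    and good: "AE y in lebesgue. \<forall>T. T > 0 \<and> norm y \<le> T \<longrightarrow> w y \<ge> (1/C) * ((Zr T / (4*T) powr d) powr k / 2)"
    and fin: "IE R \<noteq> top"
  shows "enn2real (IE R) \<ge> enn2real (IE (R/2)) +
     (min (2 powr (-\<sigma>)) 1 * (1/(2*C)) powr q * 4 powr (-(d*k*q)) * unit_ball_vol (DIM('a)) * (1 - (1/2)^DIM('a)))
      * R powr (real DIM('a) + \<sigma> - d*k*q) * Zr R powr (q*k)"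
proof -
  define V where "V = (1/C) * ((Zr R / (4*R) powr d) powr k / 2)"
  have V: "V \<ge> 0" using C by (simp add: V_def)
  define cF where "cF = min (2 powr (-\<sigma>)) 1 * R powr \<sigma> * V powr q"
  have cF: "cF \<ge> 0" by (simp add: cF_def)
  have low: "AE y in lebesgue. R/2 \<le> norm y \<and> norm y < R \<longrightarrow> cF \<le> norm y powr \<sigma> * w y powr q"
    using good
  proof eventually_elim
    case (elim y)
    show ?case
    proof
      assume y: "R/2 \<le> norm y \<and> norm y < R"
      have "w y \<ge> V" using elim[rule_format, of R] y R by (simp add: V_def)
      hence wq: "w y powr q \<ge> V powr q" using V q by (intro powr_mono2) auto
      have ny: "norm y powr \<sigma> \<ge> min (2 powr (-\<sigma>)) 1 * R powr \<sigma>" using powr_shell[of R "norm y" \<sigma>] y R by simp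
      show "cF \<le> norm y powr \<sigma> * w y powr q" unfolding cF_def
        using mult_mono[OF ny wq] by simp
    qed
  qed
  have hm: "(\<lambda>y. norm y powr \<sigma> * w y powr q) \<in> borel_measurable lebesgue" using wm by measurable
  have sh: "IE R \<ge> IE (R/2) + ennreal (cF * (unit_ball_vol (DIM('a)) * R ^ DIM('a) * (1 - (1/2) ^ DIM('a))))"
    unfolding IE_def by (rule shell[OF hm R cF low])
  have fin2: "IE (R/2) \<noteq> top"
  proof -
    have "IE (R/2) \<le> IE R" unfolding IE_def
      by (intro nn_integral_mono) (use R in \<open>auto split: split_indicator\<close>)
    thus ?thesis using fin by (auto simp: top_unique)
  qed
  have X: "cF * (unit_ball_vol (DIM('a)) * R ^ DIM('a) * (1 - (1/2) ^ DIM('a))) \<ge> 0"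
    using cF shell_vol_pos[OF R, where 'a='a] by simp
  have "enn2real (IE (R/2) + ennreal (cF * (unit_ball_vol (DIM('a)) * R ^ DIM('a) * (1 - (1/2) ^ DIM('a)))))
      \<le> enn2real (IE R)"
    using sh fin by (intro enn2real_mono) (auto simp: less_top)
  hence "enn2real (IE (R/2)) + cF * (unit_ball_vol (DIM('a)) * R ^ DIM('a) * (1 - (1/2) ^ DIM('a)))
      \<le> enn2real (IE R)"
    using fin2 X by (simp add: enn2real_plus less_top)
  moreover have "cF * (unit_ball_vol (DIM('a)) * R ^ DIM('a) * (1 - (1/2) ^ DIM('a))) =
     (min (2 powr (-\<sigma>)) 1 * (1/(2*C)) powr q * 4 powr (-(d*k*q)) * unit_ball_vol (DIM('a)) * (1 - (1/2)^DIM('a)))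
      * R powr (real DIM('a) + \<sigma> - d*k*q) * Zr R powr (q*k)"
    unfolding cF_def V_def using rewrite_const[OF R Z C, of "min (2 powr (-\<sigma>)) 1" \<sigma> d k q "unit_ball_vol (DIM('a))" "DIM('a)" "1 - (1/2)^DIM('a)"]
    by (simp add: mult.assoc)
  ultimately show ?thesis by simp
qed

lemma core:
  fixes \<beta> \<gamma> p q \<sigma>1 \<sigma>2 :: real
    and c1 c2 u v :: "'a::euclidean_space \<Rightarrow> real"
  assumes bg: "\<beta> * \<gamma> < real DIM('a)" and \<beta>: "\<beta> > 0" and g: "\<gamma> > 1"
    and p: "p > 0" and q: "q > 0"
    and s1: "\<sigma>1 > - (\<beta> * \<gamma>)" and s2: "\<sigma>2 > - (\<beta> * \<gamma>)"
    and cond: "p * q \<le> (\<gamma> - 1)\<^sup>2 \<or> (p * q > (\<gamma> - 1)\<^sup>2 \<and>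
          p0 \<beta> \<gamma> p q \<sigma>1 \<sigma>2 \<ge> (real DIM('a) - \<beta> * \<gamma>) / (\<gamma> - 1))"
    and db1: "double_bounded c1" and db2: "double_bounded c2"
    and sol: "positive_solution \<beta> \<gamma> p q \<sigma>1 \<sigma>2 c1 c2 u v"
  shows False
proof -
  define nn where "nn = real DIM('a)"
  define d where "d = nn - \<beta> * \<gamma>"
  define k where "k = 1 / (\<gamma> - 1)"
  have d: "d > 0" using bg by (simp add: d_def nn_def)
  have k: "k > 0" using g by (simp add: k_def)
  define f where "f = (\<lambda>y::'a. norm y powr \<sigma>1 * v y powr q)"
  define h where "h = (\<lambda>y::'a. norm y powr \<sigma>2 * u y powr p)"
  define FE where "FE = (\<lambda>R. \<integral>\<^sup>+ y. indicator (ball 0 R) y * ennreal (f y) \<partial>lebesgue)"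
  define GE where "GE = (\<lambda>R. \<integral>\<^sup>+ y. indicator (ball 0 R) y * ennreal (h y) \<partial>lebesgue)"
  from sol have lu: "locally_integrable u" and lv: "locally_integrable v"
    and upos: "\<And>x. u x > 0" and vpos: "\<And>x. v x > 0"
    and eqs: "AE x in lebesgue.
        ennreal (u x) = ennreal (c1 x) * wolff \<beta> \<gamma> f x \<and>
        ennreal (v x) = ennreal (c2 x) * wolff \<beta> \<gamma> h x"
    unfolding positive_solution_def f_def h_def by auto
  have um: "u \<in> borel_measurable lebesgue" using lu by (simp add: locally_integrable_def)
  have vm: "v \<in> borel_measurable lebesgue" using lv by (simp add: locally_integrable_def)
  have fm: "f \<in> borel_measurable lebesgue" unfolding f_def using vm by measurable
  have hm: "h \<in> borel_measurable lebesgue" unfolding h_def using um by measurable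
  have fpos: "f y > 0" if "y \<noteq> 0" for y using that vpos[of y] by (simp add: f_def)
  have hpos: "h y > 0" if "y \<noteq> 0" for y using that upos[of y] by (simp add: h_def)
  obtain C1 where C1: "C1 > 0" "\<And>x. 1/C1 \<le> c1 x" using db1 unfolding double_bounded_def by blast
  obtain C2 where C2: "C2 > 0" "\<And>x. 1/C2 \<le> c2 x" using db2 unfolding double_bounded_def by blast
  have dd: "real DIM('a) - \<beta> * \<gamma> > 0" using d by (simp add: d_def nn_def)
  have good: "AE x in lebesgue. \<forall>T. T > 0 \<and> norm x \<le> T \<longrightarrow>
      (FE T \<noteq> top \<and> u x \<ge> (1/C1) * ((enn2real (FE T) / (4*T) powr d) powr k / 2)) \<and>
      (GE T \<noteq> top \<and> v x \<ge> (1/C2) * ((enn2real (GE T) / (4*T) powr d) powr k / 2))"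
    using eqs
  proof eventually_elim
    case (elim x)
    show ?case
    proof (intro allI impI)
      fix T :: real assume T: "T > 0 \<and> norm x \<le> T"
      show "(FE T \<noteq> top \<and> u x \<ge> (1/C1) * ((enn2real (FE T) / (4*T) powr d) powr k / 2)) \<and>
        (GE T \<noteq> top \<and> v x \<ge> (1/C2) * ((enn2real (GE T) / (4*T) powr d) powr k / 2))"
        using good_point[of u x c1 \<beta> \<gamma> f C1 T] good_point[of v x c2 \<beta> \<gamma> h C2 T]
          elim T C1 C2 dd g upos[of x] vpos[of x]
        by (simp add: FE_def GE_def d_def nn_def k_def less_imp_le)
    qed
  qed
  obtain x0 where x0: "\<forall>T. T > 0 \<and> norm x0 \<le> T \<longrightarrow>
      (FE T \<noteq> top \<and> u x0 \<ge> (1/C1) * ((enn2real (FE T) / (4*T) powr d) powr k / 2)) \<and>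
      (GE T \<noteq> top \<and> v x0 \<ge> (1/C2) * ((enn2real (GE T) / (4*T) powr d) powr k / 2))"
    using ex_good[OF good] by blast
  have FEmono: "FE R \<le> FE T" if "R \<le> T" for R T unfolding FE_def
    by (intro nn_integral_mono) (use that in \<open>auto split: split_indicator\<close>)
  have GEmono: "GE R \<le> GE T" if "R \<le> T" for R T unfolding GE_def
    by (intro nn_integral_mono) (use that in \<open>auto split: split_indicator\<close>)
  have finF: "FE R \<noteq> top" for R
  proof -
    have "0 < max 1 (max R (norm x0)) \<and> norm x0 \<le> max 1 (max R (norm x0))"
      by (simp add: less_max_iff_disj le_max_iff_disj)
    hence "FE (max 1 (max R (norm x0))) \<noteq> top" using x0 by blast
    moreover have "R \<le> max 1 (max R (norm x0))" by (simp add: le_max_iff_disj)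
    ultimately show ?thesis using FEmono[of R "max 1 (max R (norm x0))"] by (auto simp: top_unique)
  qed
  have finG: "GE R \<noteq> top" for R
  proof -
    have "0 < max 1 (max R (norm x0)) \<and> norm x0 \<le> max 1 (max R (norm x0))"
      by (simp add: less_max_iff_disj le_max_iff_disj)
    hence "GE (max 1 (max R (norm x0))) \<noteq> top" using x0 by blast
    moreover have "R \<le> max 1 (max R (norm x0))" by (simp add: le_max_iff_disj)
    ultimately show ?thesis using GEmono[of R "max 1 (max R (norm x0))"] by (auto simp: top_unique)
  qed
  define Fr where "Fr = (\<lambda>R. enn2real (FE R))"
  define Gr where "Gr = (\<lambda>R. enn2real (GE R))"
  have posF: "Fr R > 0" if "R > 0" for R
    using ball_integral_pos[OF fm fpos that] finF[of R]
    by (simp add: Fr_def FE_def enn2real_positive_iff less_top)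
  have posG: "Gr R > 0" if "R > 0" for R
    using ball_integral_pos[OF hm hpos that] finG[of R]
    by (simp add: Gr_def GE_def enn2real_positive_iff less_top)
  define A1 where "A1 = min (2 powr (-\<sigma>1)) 1 * (1/(2*C2)) powr q * 4 powr (-(d*k*q)) * unit_ball_vol (DIM('a)) * (1 - (1/2)^DIM('a))"
  define A2 where "A2 = min (2 powr (-\<sigma>2)) 1 * (1/(2*C1)) powr p * 4 powr (-(d*k*p)) * unit_ball_vol (DIM('a)) * (1 - (1/2)^DIM('a))"
  have hpow: "(1/2::real)^DIM('a) < 1" by (simp add: power_less_one_iff)
  have A1: "A1 > 0" using C2 hpow by (simp add: A1_def)
  have A2: "A2 > 0" using C1 hpow by (simp add: A2_def)
  have goodv: "AE y in lebesgue. \<forall>T. T > 0 \<and> norm y \<le> T \<longrightarrow> v y \<ge> (1/C2) * ((Gr T / (4*T) powr d) powr k / 2)"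
    using good by eventually_elim (auto simp: Gr_def)
  have goodu: "AE y in lebesgue. \<forall>T. T > 0 \<and> norm y \<le> T \<longrightarrow> u y \<ge> (1/C1) * ((Fr T / (4*T) powr d) powr k / 2)"
    using good by eventually_elim (auto simp: Fr_def)
  have S1: "Fr R \<ge> Fr (R/2) + A1 * R powr (nn + \<sigma>1 - d*k*q) * Gr R powr (q*k)" if R: "R > 0" for R
    using S_step[OF vm q C2(1) R posG[OF R] goodv, of \<sigma>1] finF[of R]
    by (simp add: Fr_def FE_def f_def A1_def nn_def)
  have S2: "Gr R \<ge> Gr (R/2) + A2 * R powr (nn + \<sigma>2 - d*k*p) * Fr R powr (p*k)" if R: "R > 0" for R
    using S_step[OF um p C1(1) R posF[OF R] goodu, of \<sigma>2] finG[of R]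
    by (simp add: Gr_def GE_def h_def A2_def nn_def)
  define R0 where "R0 = max 1 (norm x0)"
  have R0: "R0 > 0" by (simp add: R0_def less_max_iff_disj)
  define B where "B = 2 * C2 * v x0"
  have B: "B > 0" using C2 vpos[of x0] by (simp add: B_def)
  define Cg where "Cg = B powr (\<gamma> - 1) * 4 powr d"
  have Cg: "Cg > 0" using B by (simp add: Cg_def)
  have Ub: "Gr R \<le> Cg * R powr d" if R: "R \<ge> R0" for R
  proof -
    have Rp: "R > 0" using R R0 by simp
    have "0 < R \<and> norm x0 \<le> R" using R by (simp add: R0_def)
    hence "v x0 \<ge> (1/C2) * ((Gr R / (4*R) powr d) powr k / 2)" using x0 by (simp add: Gr_def)
    hence "(Gr R / (4*R) powr d) powr k \<le> B" using C2 by (simp add: B_def field_simps)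
    hence "((Gr R / (4*R) powr d) powr k) powr (\<gamma>-1) \<le> B powr (\<gamma>-1)"
      using g by (intro powr_mono2) auto
    moreover have "((Gr R / (4*R) powr d) powr k) powr (\<gamma>-1) = Gr R / (4*R) powr d"
      using g posG[OF Rp] by (simp add: powr_powr k_def)
    ultimately have "Gr R / (4*R) powr d \<le> B powr (\<gamma>-1)" by simp
    hence "Gr R \<le> B powr (\<gamma>-1) * (4*R) powr d" using Rp by (simp add: field_simps)
    thus ?thesis by (simp add: Cg_def powr_mult mult.assoc)
  qed
  have cnd: "(p*q*k^2 \<le> 1 \<and> (nn + \<sigma>2 - d*k*p) + p*k*(nn + \<sigma>1 - d*k*q) > d*(1 - p*q*k^2)) \<or>
      (p*q*k^2 > 1 \<and> (nn + \<sigma>2 - d*k*p) + p*k*(nn + \<sigma>1 - d*k*q) \<ge> 0)"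
    using cond_alg[OF g p q s1 s2, of nn] cond by (simp add: d_def k_def p0_def nn_def)
  show False
  proof (rule final_contra[OF k p q d A1 A2 R0 Cg])
    show "A1 * R powr (nn + \<sigma>1 - d*k*q) * Gr R powr (q*k) \<le> Fr R" if "R0 \<le> R" for R
      using S1[of R] that R0 enn2real_nonneg[of "FE (R/2)"] unfolding Fr_def by linarith
    show "Gr (R/2) + A2 * R powr (nn + \<sigma>2 - d*k*p) * Fr R powr (p*k) \<le> Gr R" if "R0 \<le> R" for R
      using S2[of R] that R0 by simp
  qed (use posG posF Ub cnd in auto)
qed

theorem theorem2:
  fixes \<beta> \<gamma> p q \<sigma>1 \<sigma>2 :: real
    and c1 c2 u v :: "'a::euclidean_space \<Rightarrow> real"
  assumes "DIM('a) \<ge> 3"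
    and "\<beta> > 0" and "\<gamma> > 1" and "\<beta> * \<gamma> < real DIM('a)"
    and "p > 0" and "q > 0"
    and "\<sigma>1 > - (\<beta> * \<gamma>)" and "\<sigma>2 > - (\<beta> * \<gamma>)"
    and "p * q \<le> (\<gamma> - 1)\<^sup>2
         \<or> (p * q > (\<gamma> - 1)\<^sup>2 \<and>
            max (q0 \<beta> \<gamma> p q \<sigma>1 \<sigma>2) (p0 \<beta> \<gamma> p q \<sigma>1 \<sigma>2)
              > (real DIM('a) - \<beta> * \<gamma>) / (\<gamma> - 1))
         \<or> (\<gamma> \<le> 2 \<and> p * q > (\<gamma> - 1)\<^sup>2 \<and>
            max (q0 \<beta> \<gamma> p q \<sigma>1 \<sigma>2) (p0 \<beta> \<gamma> p q \<sigma>1 \<sigma>2)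
              = (real DIM('a) - \<beta> * \<gamma>) / (\<gamma> - 1))"
    and "double_bounded c1" and "double_bounded c2"
  shows "\<not> positive_solution \<beta> \<gamma> p q \<sigma>1 \<sigma>2 c1 c2 u v"
proof
  assume sol: "positive_solution \<beta> \<gamma> p q \<sigma>1 \<sigma>2 c1 c2 u v"
  have sol': "positive_solution \<beta> \<gamma> q p \<sigma>2 \<sigma>1 c2 c1 v u"
    using sol unfolding positive_solution_def by auto
  have pq: "p0 \<beta> \<gamma> q p \<sigma>2 \<sigma>1 = q0 \<beta> \<gamma> p q \<sigma>1 \<sigma>2"
    unfolding p0_def q0_def by (simp add: mult.commute)
  from assms(9) consider (a) "p * q \<le> (\<gamma> - 1)\<^sup>2"
    | (b) "p * q > (\<gamma> - 1)\<^sup>2" "max (q0 \<beta> \<gamma> p q \<sigma>1 \<sigma>2) (p0 \<beta> \<gamma> p q \<sigma>1 \<sigma>2) \<ge> (real DIM('a) - \<beta> * \<gamma>) / (\<gamma> - 1)"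
    by fastforce
  then show False
  proof cases
    case a
    thus False using core[OF assms(4,2,3,5,6,7,8) _ assms(10,11) sol] by blast
  next
    case b
    show False
    proof (cases "p0 \<beta> \<gamma> p q \<sigma>1 \<sigma>2 \<ge> (real DIM('a) - \<beta> * \<gamma>) / (\<gamma> - 1)")
      case True
      thus False using core[OF assms(4,2,3,5,6,7,8) _ assms(10,11) sol] b by blast
    next
      case False
      hence "p0 \<beta> \<gamma> q p \<sigma>2 \<sigma>1 \<ge> (real DIM('a) - \<beta> * \<gamma>) / (\<gamma> - 1)"
        using b(2) pq by (simp add: max_def split: if_splits)
      moreover have "q * p > (\<gamma> - 1)\<^sup>2" using b(1) by (simp add: mult.commute)
      ultimately show False using core[OF assms(4,2,3,6,5,8,7) _ assms(11,10) sol'] by blast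
    qed
  qed
qed

end
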